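(* Let $\mathbb{S}$ be a collection of subsets of $\{1,\dots,m\}$, each of size $l$, and let $t$ be a positive integer. Then $$\frac{1}{|\mathbb{S}|^2}\sum_{\mathcal{J},\mathcal{J}'\in\mathbb{S}}|\mathcal{J}\cap\mathcal{J}'|^t\ \ge\ \mathrm{tr}(D_{t,l,m}^2),$$ and equality holds if and only if $\mathbb{S}$ is a $t$-$(m,l,\lambda)$ block design with $\lambda=|\mathbb{S}|\,\mathrm{tr}\big(D_{t,l,m}\bigotimes_{s=1}^tE_{s,s}\big)$.
   Context: Let $\{e_j\}_{j=1}^m$ be the canonical basis of $\mathbb{F}^m$ ($\mathbb{F}=\mathbb{R}$ or $\mathbb{C}$) and $E_{s,s}=e_s\otimes e_s^*$. For $\mathcal{J}\subset\{1,\dots,m\}$ let $D_{\mathcal{J}}=\sum_{j\in\mathcal{J}}E_{j,j}$. The diagonal coherence tensor is $D_{t,l,m}=\binom{m}{l}^{-1}\sum_{\mathcal{J}\in\mathbb{J}}D_{\mathcal{J}}^{\otimes t}$, where $\mathbb{J}$ is the set of all $l$-element subsets of $\{1,\dots,m\}$ and $^{\otimes t}$ is the $t$-fold Kronecker product. A $t$-$(m,l,\lambda)$ block design is a collection of subsets (blocks) of $\{1,\dots,m\}$, each of cardinality $l$, such that every $t$-element subset of $\{1,\dots,m\}$ is contained in exactly $\lambda$ blocks. *)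

theory Defs
  imports "Jordan_Normal_Form.Matrix" "HOL-Library.Multiset"
begin

definition kron :: "real mat \<Rightarrow> real mat \<Rightarrow> real mat" where
  "kron A B = mat (dim_row A * dim_row B) (dim_col A * dim_col B)
     (\<lambda>(i, j). A $$ (i div dim_row B, j div dim_col B) * B $$ (i mod dim_row B, j mod dim_col B))"

definition mtrace :: "real mat \<Rightarrow> real" where
  "mtrace A = (\<Sum>i<dim_row A. A $$ (i, i))"

fun kron_pow :: "real mat \<Rightarrow> nat \<Rightarrow> real mat" where
  "kron_pow A 0 = 1\<^sub>m 1"
| "kron_pow A (Suc n) = kron A (kron_pow A n)"

fun kron_list :: "real mat list \<Rightarrow> real mat" where
  "kron_list [] = 1\<^sub>m 1"
| "kron_list (A # As) = kron A (kron_list As)"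

text \<open>E_{s,s} = e_s e_s^* in F^m, with s in {1..m} (matrix indices are 0-based).\<close>
definition Ess :: "nat \<Rightarrow> nat \<Rightarrow> real mat" where
  "Ess m s = mat m m (\<lambda>(i, j). if i = j \<and> i + 1 = s then 1 else 0)"

text \<open>D_J = sum_{j in J} E_{j,j}, for J a subset of {1..m}.\<close>
definition DJ :: "nat \<Rightarrow> nat set \<Rightarrow> real mat" where
  "DJ m J = mat m m (\<lambda>(i, j). if i = j \<and> i + 1 \<in> J then 1 else 0)"

definition lsubsets :: "nat \<Rightarrow> nat \<Rightarrow> nat set set" where
  "lsubsets l m = {J. J \<subseteq> {1..m} \<and> card J = l}"

text \<open>Diagonal coherence tensor D_{t,l,m} = binom(m,l)^{-1} sum_{J} D_J^{tensor t}
  (the matrix sum written entrywise).\<close>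
definition Dtlm :: "nat \<Rightarrow> nat \<Rightarrow> nat \<Rightarrow> real mat" where
  "Dtlm t l m = mat (m ^ t) (m ^ t)
     (\<lambda>ij. (1 / real (m choose l)) * (\<Sum>J\<in>lsubsets l m. kron_pow (DJ m J) t $$ ij))"

text \<open>t-(m,l,lambda) block design: a collection (multiset) of l-subsets of {1..m}
  such that every t-subset of {1..m} is contained in exactly lambda blocks
  (blocks counted with multiplicity).\<close>
definition block_design :: "nat \<Rightarrow> nat \<Rightarrow> nat \<Rightarrow> nat \<Rightarrow> nat set multiset \<Rightarrow> bool" where
  "block_design t m l lam S \<longleftrightarrow>
     (\<forall>B\<in>#S. B \<subseteq> {1..m} \<and> card B = l) \<and>
     (\<forall>T. T \<subseteq> {1..m} \<and> card T = t \<longrightarrow> size (filter_mset (\<lambda>B. T \<subseteq> B) S) = lam)"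

end

theory Submission
  imports Defs
begin

lemma sum_split_mult: fixes g :: "nat \<Rightarrow> 'b::comm_monoid_add"
  shows "(\<Sum>i<m*k. g i) = (\<Sum>a<m. \<Sum>b<k. g (a*k+b))"
proof -
  have "(\<Sum>i<m*k. g i) = (\<Sum>a<m. sum g {a*k..<a*k+k})" using sum.nat_group[of g k m] by simp
  also have "\<dots> = (\<Sum>a<m. \<Sum>b<k. g (a*k+b))"
  proof (rule sum.cong[OF refl])
    fix a show "sum g {a*k..<a*k+k} = (\<Sum>b<k. g (a*k+b))"
      by (rule sum.reindex_bij_witness[of _ "\<lambda>b. a*k+b" "\<lambda>i. i - a*k"]) auto
  qed
  finally show ?thesis .
qed

fun digs :: "nat \<Rightarrow> nat \<Rightarrow> nat \<Rightarrow> nat set" where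
  "digs m 0 i = {}"
| "digs m (Suc n) i = insert (i div m^n + 1) (digs m n (i mod m^n))"

lemma dims_kron[simp]: "dim_row (kron A B) = dim_row A * dim_row B" "dim_col (kron A B) = dim_col A * dim_col B"
  by (auto simp: kron_def)

lemma dims_kron_pow[simp]: "dim_row (kron_pow (DJ m J) n) = m^n" "dim_col (kron_pow (DJ m J) n) = m^n"
  by (induction n) (auto simp: DJ_def)

lemma dims_DJ[simp]: "dim_row (DJ m J) = m" "dim_col (DJ m J) = m" by (auto simp: DJ_def)

lemma kron_index: "i < dim_row A * dim_row B \<Longrightarrow> j < dim_col A * dim_col B \<Longrightarrow>
  kron A B $$ (i,j) = A $$ (i div dim_row B, j div dim_col B) * B $$ (i mod dim_row B, j mod dim_col B)"
  by (simp add: kron_def)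

lemma divmod_eq_iff: "(i::nat) = j \<longleftrightarrow> i div k = j div k \<and> i mod k = j mod k"
  by (metis div_mult_mod_eq)

lemma kron_pow_DJ: "i < m^n \<Longrightarrow> j < m^n \<Longrightarrow>
   kron_pow (DJ m J) n $$ (i,j) = (if i = j \<and> digs m n i \<subseteq> J then 1 else 0)"
proof (induction n arbitrary: i j)
  case 0 then show ?case by simp
next
  case (Suc n)
  have id: "i div m^n < m" "j div m^n < m" using Suc.prems
    by (simp_all add: less_mult_imp_div_less mult.commute)
  have "m^n > 0" using Suc.prems by (cases "m^n") auto
  then have md: "i mod m^n < m^n" "j mod m^n < m^n" by auto
  have "kron_pow (DJ m J) (Suc n) $$ (i,j) = DJ m J $$ (i div m^n, j div m^n) * kron_pow (DJ m J) n $$ (i mod m^n, j mod m^n)"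
    using Suc.prems unfolding kron_pow.simps by (subst kron_index) simp_all
  also have "\<dots> = (if i = j \<and> digs m (Suc n) i \<subseteq> J then 1 else 0)"
    using id md Suc.IH[OF md(1) md(2)] divmod_eq_iff[of i j "m^n"] by (auto simp: DJ_def)
  finally show ?case .
qed

lemma digs_sub: "i < m^n \<Longrightarrow> digs m n i \<subseteq> {1..m}"
proof (induction n arbitrary: i)
  case (Suc n)
  have "m^n > 0" using Suc.prems by (cases "m^n") auto
  moreover have "i div m^n < m" using Suc.prems by (simp add: less_mult_imp_div_less mult.commute)
  ultimately show ?case using Suc.IH[of "i mod m^n"] by auto
qed simp

lemma digs_finite: "finite (digs m n i)"
  by (induction n arbitrary: i) auto

lemma digs_card: "card (digs m n i) \<le> n"
proof (induction n arbitrary: i)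
  case (Suc n)
  have "card (digs m n (i mod m^n)) \<le> n" using Suc.IH .
  then show ?case by (auto simp: digs_finite card_insert_if)
qed simp

lemma digs_ne: "n > 0 \<Longrightarrow> digs m n i \<noteq> {}"
  by (cases n) auto

lemma card_sum_digs: "(\<Sum>i<m^n. if digs m n i \<subseteq> A then 1 else 0 :: real) = real (card (A \<inter> {1..m}))^n"
proof (induction n)
  case 0 then show ?case by simp
next
  case (Suc n)
  have pos: "m^n > 0 \<or> m = 0" by auto
  have "(\<Sum>i<m^Suc n. if digs m (Suc n) i \<subseteq> A then 1 else 0 :: real)
     = (\<Sum>a<m. \<Sum>b<m^n. if digs m (Suc n) (a*m^n+b) \<subseteq> A then 1 else 0)"
    by (simp add: sum_split_mult mult.commute)
  also have "\<dots> = (\<Sum>a<m. \<Sum>b<m^n. (if a+1 \<in> A then 1 else 0) * (if digs m n b \<subseteq> A then 1 else 0))"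
    by (intro sum.cong refl) auto
  also have "\<dots> = (\<Sum>a<m. if a+1 \<in> A then 1 else 0) * (\<Sum>b<m^n. if digs m n b \<subseteq> A then 1 else (0::real))"
    by (rule sum_product[symmetric])
  also have "(\<Sum>a<m. if a+1 \<in> A then 1 else (0::real)) = real (card (A \<inter> {1..m}))"
  proof -
    have "(\<Sum>a<m. if a+1 \<in> A then 1 else (0::real)) = real (card {a\<in>{..<m}. a+1 \<in> A})"
      apply (simp add: sum.If_cases) apply (rule arg_cong[where f=card]) by auto
    also have "card {a\<in>{..<m}. a+1 \<in> A} = card (A \<inter> {1..m})"
    proof (rule bij_betw_same_card[of Suc])
      show "bij_betw Suc {a \<in> {..<m}. a + 1 \<in> A} (A \<inter> {1..m})"
        unfolding bij_betw_def
      proof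
        show "Suc ` {a \<in> {..<m}. a + 1 \<in> A} = A \<inter> {1..m}"
        proof (intro equalityI subsetI)
          fix x assume "x \<in> A \<inter> {1..m}"
          then show "x \<in> Suc ` {a \<in> {..<m}. a + 1 \<in> A}"
            by (intro image_eqI[of _ _ "x - 1"]) auto
        qed auto
      qed simp
    qed
    finally show ?thesis .
  qed
  finally show ?case using Suc.IH by simp
qed

lemma digs_surj: "T \<subseteq> {1..m} \<Longrightarrow> card T \<le> n \<Longrightarrow> (T = {} \<longleftrightarrow> n = 0) \<Longrightarrow> \<exists>i<m^n. digs m n i = T"
proof (induction n arbitrary: T)
  case 0 then show ?case by simp
next
  case (Suc n)
  have fin: "finite T" using Suc.prems(1) finite_subset by blast
  obtain x where x: "x \<in> T" using Suc.prems(3) by auto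
  define T' where "T' = (if card T = Suc n then T - {x} else T)"
  have T'sub: "T' \<subseteq> {1..m}" using Suc.prems(1) by (auto simp: T'_def)
  have cT': "card T' \<le> n" using Suc.prems(2) x fin by (auto simp: T'_def)
  have eT': "T' = {} \<longleftrightarrow> n = 0"
  proof (cases "card T = Suc n")
    case True
    then have "card (T - {x}) = n" using x fin by (simp add: card_Diff_singleton)
    then show ?thesis using True fin by (auto simp: T'_def)
  next
    case False
    have "card T > 0" using fin x card_gt_0_iff by blast
    then show ?thesis using False Suc.prems x fin by (auto simp: T'_def)
  qed
  obtain i' where i': "i' < m^n" "digs m n i' = T'" using Suc.IH[OF T'sub cT' eT'] by auto
  have xm: "1 \<le> x" "x \<le> m" using x Suc.prems(1) by auto
  define i where "i = (x-1)*m^n + i'"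
  have "i < (x-1)*m^n + m^n" using i' by (simp add: i_def)
  also have "\<dots> = x * m^n" using xm by (cases x) auto
  also have "\<dots> \<le> m * m^n" using xm by simp
  finally have ilt: "i < m^Suc n" by simp
  have pos: "m^n > 0" using i' by (cases "m^n") auto
  have "i div m^n = x - 1" "i mod m^n = i'" using i' pos by (auto simp: i_def)
  then have "digs m (Suc n) i = insert x T'" using i' xm by simp
  also have "\<dots> = T" using x by (auto simp: T'_def)
  finally show ?case using ilt by blast
qed

fun eidx :: "nat \<Rightarrow> nat \<Rightarrow> nat \<Rightarrow> nat" where
  "eidx m a 0 = 0"
| "eidx m a (Suc n) = (a-1)*m^n + eidx m (Suc a) n"

lemma eidx_props: "1 \<le> a \<Longrightarrow> a + n \<le> m + 1 \<Longrightarrow> eidx m a n < m^n \<and> digs m n (eidx m a n) = {a..<a+n}"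
proof (induction n arbitrary: a)
  case 0 then show ?case by simp
next
  case (Suc n)
  have IH: "eidx m (Suc a) n < m^n" "digs m n (eidx m (Suc a) n) = {Suc a..<Suc a+n}"
    using Suc.IH[of "Suc a"] Suc.prems by auto
  have pos: "m^n > 0" using IH by (cases "m^n") auto
  have "eidx m a (Suc n) < (a-1)*m^n + m^n" using IH by simp
  also have "\<dots> = a * m^n" using Suc.prems by (cases a) auto
  also have "\<dots> \<le> m * m^n" using Suc.prems by simp
  finally have lt: "eidx m a (Suc n) < m^Suc n" by simp
  have "eidx m a (Suc n) div m^n = a - 1" "eidx m a (Suc n) mod m^n = eidx m (Suc a) n"
    using IH pos by auto
  then have "digs m (Suc n) (eidx m a (Suc n)) = insert a {Suc a..<Suc a+n}"
    using IH Suc.prems by simp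
  also have "\<dots> = {a..<a + Suc n}" by auto
  finally show ?case using lt by blast
qed

lemma dims_Ess[simp]: "dim_row (Ess m s) = m" "dim_col (Ess m s) = m" by (auto simp: Ess_def)

lemma dims_kron_list[simp]: "dim_row (kron_list (map (Ess m) xs)) = m^length xs"
   "dim_col (kron_list (map (Ess m) xs)) = m^length xs"
  by (induction xs) auto

lemma kron_list_Ess: "1 \<le> a \<Longrightarrow> a + n \<le> m + 1 \<Longrightarrow> i < m^n \<Longrightarrow> j < m^n \<Longrightarrow>
  kron_list (map (Ess m) [a..<a+n]) $$ (i,j) = (if i = j \<and> i = eidx m a n then 1 else 0)"
proof (induction n arbitrary: a i j)
  case 0 then show ?case by simp
next
  case (Suc n)
  have ls: "[a..<a+Suc n] = a # [Suc a..<Suc a+n]" by (simp add: upt_rec)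
  have id: "i div m^n < m" "j div m^n < m" using Suc.prems
    by (simp_all add: less_mult_imp_div_less mult.commute)
  have "m^n > 0" using Suc.prems by (cases "m^n") auto
  then have md: "i mod m^n < m^n" "j mod m^n < m^n" by auto
  have "kron_list (map (Ess m) [a..<a+Suc n]) $$ (i,j) = Ess m a $$ (i div m^n, j div m^n)
        * kron_list (map (Ess m) [Suc a..<Suc a+n]) $$ (i mod m^n, j mod m^n)"
  proof -
    define R where "R = kron_list (map (Ess m) [Suc a..<Suc a+n])"
    have dR: "dim_row R = m^n" "dim_col R = m^n" unfolding R_def dims_kron_list length_upt by simp_all
    have "kron (Ess m a) R $$ (i,j) = Ess m a $$ (i div dim_row R, j div dim_col R) * R $$ (i mod dim_row R, j mod dim_col R)"
      by (rule kron_index) (use Suc.prems dR in simp_all)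
    then show ?thesis unfolding ls list.map kron_list.simps R_def[symmetric] dR .
  qed
  also have "\<dots> = (if i = j \<and> i = eidx m a (Suc n) then 1 else 0)"
  proof -
    have IH: "kron_list (map (Ess m) [Suc a..<Suc a+n]) $$ (i mod m^n, j mod m^n)
       = (if i mod m^n = j mod m^n \<and> i mod m^n = eidx m (Suc a) n then 1 else 0)"
      using Suc.IH[of "Suc a", OF _ _ md] Suc.prems by simp
    have e: "i = eidx m a (Suc n) \<longleftrightarrow> i div m^n = a - 1 \<and> i mod m^n = eidx m (Suc a) n"
    proof -
      have "eidx m (Suc a) n < m^n" using eidx_props[of "Suc a" n m] Suc.prems by simp
      then have "eidx m a (Suc n) div m^n = a - 1 \<and> eidx m a (Suc n) mod m^n = eidx m (Suc a) n"
        using \<open>m^n > 0\<close> by simp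
      then show ?thesis using divmod_eq_iff[of i "eidx m a (Suc n)" "m^n"] by auto
    qed
    show ?thesis using id IH e divmod_eq_iff[of i j "m^n"] Suc.prems
      by (auto simp: Ess_def)
  qed
  finally show ?case .
qed

lemma trace_diag: assumes "A \<in> carrier_mat M M" "B \<in> carrier_mat M M"
  "\<And>i j. i < M \<Longrightarrow> j < M \<Longrightarrow> A $$ (i,j) = (if i = j then a i else 0)"
  "\<And>i j. i < M \<Longrightarrow> j < M \<Longrightarrow> B $$ (i,j) = (if i = j then b i else 0)"
  shows "mtrace (A * B) = (\<Sum>i<M. a i * b i)"
proof -
  have "mtrace (A * B) = (\<Sum>i<M. (A*B) $$ (i,i))" using assms by (simp add: mtrace_def)
  also have "\<dots> = (\<Sum>i<M. a i * b i)"
  proof (rule sum.cong[OF refl])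
    fix i assume i: "i \<in> {..<M}"
    have "(A*B) $$ (i,i) = (\<Sum>k\<in>{0..<M}. A $$ (i,k) * B $$ (k,i))"
      using assms i by (simp add: scalar_prod_def)
    also have "\<dots> = (\<Sum>k\<in>{0..<M}. if k = i then a i * b i else 0)"
      by (rule sum.cong[OF refl]) (use assms i in auto)
    also have "\<dots> = a i * b i" using i by simp
    finally show "(A*B) $$ (i,i) = a i * b i" .
  qed
  finally show ?thesis .
qed

lemma inj_on_img_subset: "inj_on f C \<Longrightarrow> A \<subseteq> C \<Longrightarrow> B \<subseteq> C \<Longrightarrow> f ` A \<subseteq> f ` B \<longleftrightarrow> A \<subseteq> B"
proof
  assume a: "inj_on f C" "A \<subseteq> C" "B \<subseteq> C" "f ` A \<subseteq> f ` B"
  then have "f ` (A \<inter> B) = f ` A" using inj_on_image_Int[of f C A B] by auto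
  then have "A \<inter> B = A" using inj_on_image_eq_iff[of f C "A \<inter> B" A] a by auto
  then show "A \<subseteq> B" by auto
qed auto

lemma perm_exists:
  fixes m :: nat and A B :: "nat set"
  assumes "A \<subseteq> {1..m}" "B \<subseteq> {1..m}" "card A = card B"
  shows "\<exists>p. bij_betw p {1..m} {1..m} \<and> p ` A = B"
proof -
  have fA: "finite A" "finite B" using finite_subset[OF assms(1)] finite_subset[OF assms(2)] by auto
  obtain f where f: "bij_betw f A B" using finite_same_card_bij[OF fA assms(3)] by blast
  have "card ({1..m} - A) = card ({1..m} - B)"
    using assms fA by (simp add: card_Diff_subset)
  then obtain g where g: "bij_betw g ({1..m} - A) ({1..m} - B)"
    using finite_same_card_bij[of "{1..m} - A" "{1..m} - B"] by auto
  define p where "p x = (if x \<in> A then f x else g x)" for x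
  have pf: "bij_betw p A B" using f by (rule bij_betw_cong[THEN iffD1, rotated]) (simp add: p_def)
  have pg: "bij_betw p ({1..m} - A) ({1..m} - B)" using g
    by (rule bij_betw_cong[THEN iffD1, rotated]) (simp add: p_def)
  have "bij_betw p (A \<union> ({1..m} - A)) (B \<union> ({1..m} - B))"
    by (rule bij_betw_combine[OF pf pg]) auto
  moreover have "A \<union> ({1..m} - A) = {1..m}" "B \<union> ({1..m} - B) = {1..m}" using assms by auto
  ultimately have "bij_betw p {1..m} {1..m}" by simp
  moreover have "p ` A = B" using pf by (simp add: bij_betw_def)
  ultimately show ?thesis by blast
qed

lemma finite_L: "finite (lsubsets l m)"
  unfolding lsubsets_def by (rule finite_subset[of _ "Pow {1..m}"]) auto

lemma card_L: "card (lsubsets l m) = m choose l"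
  using n_subsets[of "{1..m}" l] by (simp add: lsubsets_def)

lemma image_L:
  assumes p: "bij_betw p {1..m} {1..m}"
  shows "bij_betw (image p) (lsubsets l m) (lsubsets l m)"
proof -
  have inj: "inj_on p {1..m}" and im: "p ` {1..m} = {1..m}" using p by (auto simp: bij_betw_def)
  have sub: "image p ` lsubsets l m \<subseteq> lsubsets l m"
  proof
    fix X assume "X \<in> image p ` lsubsets l m"
    then obtain J where J: "J \<in> lsubsets l m" "X = p ` J" by auto
    then have "J \<subseteq> {1..m}" "card J = l" by (auto simp: lsubsets_def)
    then have "card (p ` J) = l" using inj by (simp add: card_image inj_on_subset)
    moreover have "p ` J \<subseteq> {1..m}" using \<open>J \<subseteq> {1..m}\<close> im by auto
    ultimately show "X \<in> lsubsets l m" using J by (simp add: lsubsets_def)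
  qed
  have injL: "inj_on (image p) (lsubsets l m)"
    by (rule inj_onI) (use inj_on_image_eq_iff[OF inj] in \<open>auto simp: lsubsets_def\<close>)
  have "image p ` lsubsets l m = lsubsets l m" by (rule endo_inj_surj[OF finite_L sub injL])
  with injL show ?thesis by (simp add: bij_betw_def)
qed

definition cL :: "nat \<Rightarrow> nat \<Rightarrow> nat set \<Rightarrow> nat" where
  "cL l m A = card {J \<in> lsubsets l m. A \<subseteq> J}"

lemma cL_sym:
  assumes "A \<subseteq> {1..m}" "B \<subseteq> {1..m}" "card A = card B"
  shows "cL l m A = cL l m B"
proof -
  obtain p where p: "bij_betw p {1..m} {1..m}" "p ` A = B" using perm_exists[OF assms] by blast
  have inj: "inj_on p {1..m}" using p by (auto simp: bij_betw_def)
  have bL: "bij_betw (image p) (lsubsets l m) (lsubsets l m)" by (rule image_L[OF p(1)])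
  have "bij_betw (image p) {J \<in> lsubsets l m. A \<subseteq> J} {J \<in> lsubsets l m. B \<subseteq> J}"
  proof (rule bij_betw_subset[OF bL])
    show "{J \<in> lsubsets l m. A \<subseteq> J} \<subseteq> lsubsets l m" by auto
    show "image p ` {J \<in> lsubsets l m. A \<subseteq> J} = {J \<in> lsubsets l m. B \<subseteq> J}"
    proof (intro equalityI subsetI)
      fix X assume "X \<in> image p ` {J \<in> lsubsets l m. A \<subseteq> J}"
      then obtain J where J: "J \<in> lsubsets l m" "A \<subseteq> J" "X = p ` J" by auto
      have "X \<in> lsubsets l m" using bL J by (auto simp: bij_betw_def)
      moreover have "B \<subseteq> X" using J p by auto
      ultimately show "X \<in> {J \<in> lsubsets l m. B \<subseteq> J}" by simp
    next
      fix X assume X: "X \<in> {J \<in> lsubsets l m. B \<subseteq> J}"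
      have "X \<in> image p ` lsubsets l m" using X bL by (auto simp: bij_betw_def)
      then obtain J where J: "J \<in> lsubsets l m" "X = p ` J" by auto
      have "p ` A \<subseteq> p ` J" using X J p by auto
      then have "A \<subseteq> J" using inj_on_img_subset[OF inj assms(1)] J by (auto simp: lsubsets_def)
      then show "X \<in> image p ` {J \<in> lsubsets l m. A \<subseteq> J}" using J by auto
    qed
  qed
  then show ?thesis unfolding cL_def by (rule bij_betw_same_card)
qed

definition WW :: "nat \<Rightarrow> nat \<Rightarrow> nat \<Rightarrow> nat set \<Rightarrow> real" where
  "WW t l m J = (\<Sum>J'\<in>lsubsets l m. real (card (J \<inter> J')) ^ t)"

lemma WW_sym:
  assumes "J1 \<in> lsubsets l m" "J2 \<in> lsubsets l m"
  shows "WW t l m J1 = WW t l m J2"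
proof -
  have s: "J1 \<subseteq> {1..m}" "J2 \<subseteq> {1..m}" "card J1 = card J2" using assms by (auto simp: lsubsets_def)
  obtain p where p: "bij_betw p {1..m} {1..m}" "p ` J1 = J2" using perm_exists[OF s] by blast
  have inj: "inj_on p {1..m}" using p by (auto simp: bij_betw_def)
  have "WW t l m J2 = (\<Sum>J'\<in>lsubsets l m. real (card (J2 \<inter> p ` J')) ^ t)"
    unfolding WW_def by (rule sum.reindex_bij_betw[OF image_L[OF p(1)], symmetric])
  also have "\<dots> = (\<Sum>J'\<in>lsubsets l m. real (card (J1 \<inter> J')) ^ t)"
  proof (rule sum.cong[OF refl])
    fix J' assume "J' \<in> lsubsets l m"
    then have J': "J' \<subseteq> {1..m}" by (auto simp: lsubsets_def)
    have "J2 \<inter> p ` J' = p ` (J1 \<inter> J')" using inj_on_image_Int[OF inj s(1) J'] p by simp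
    moreover have "card (p ` (J1 \<inter> J')) = card (J1 \<inter> J')"
      by (rule card_image[OF inj_on_subset[OF inj]]) (use J' in auto)
    ultimately show "real (card (J2 \<inter> p ` J')) ^ t = real (card (J1 \<inter> J')) ^ t" by simp
  qed
  finally show ?thesis unfolding WW_def by simp
qed

lemma sum_ind_card: "finite A \<Longrightarrow> (\<Sum>x\<in>A. if P x then 1 else 0 :: 'a::semiring_1) = of_nat (card {x\<in>A. P x})"
  by (simp add: sum.inter_filter[symmetric])

lemma sum_mset_ind: "(\<Sum>J\<in>#S. if P J then c else 0 :: 'a::semiring_1) = of_nat (size (filter_mset P S)) * c"
  by (induction S) (auto simp: algebra_simps)

lemma sum_mset_swap: "(\<Sum>J\<in>#S. \<Sum>i\<in>I. g J i) = (\<Sum>i\<in>I. \<Sum>J\<in>#S. (g J i :: 'a::comm_monoid_add))"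
  by (induction S) (auto simp: sum.distrib)

lemma dc_mset: "finite TT \<Longrightarrow> (\<Sum>T\<in>TT. size (filter_mset (\<lambda>J. T \<subseteq> J) S)) = (\<Sum>J\<in>#S. card {T\<in>TT. T \<subseteq> J})"
proof (induction S)
  case empty then show ?case by simp
next
  case (add J S)
  have "(\<Sum>T\<in>TT. size (filter_mset (\<lambda>J'. T \<subseteq> J') (add_mset J S)))
     = (\<Sum>T\<in>TT. size (filter_mset (\<lambda>J'. T \<subseteq> J') S) + (if T \<subseteq> J then 1 else 0))"
    by (rule sum.cong) auto
  also have "\<dots> = (\<Sum>T\<in>TT. size (filter_mset (\<lambda>J'. T \<subseteq> J') S)) + card {T\<in>TT. T \<subseteq> J}"
    using add.prems by (simp add: sum.distrib sum_ind_card)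
  finally show ?case using add by simp
qed

lemma dc_set: "finite TT \<Longrightarrow> finite LL \<Longrightarrow> (\<Sum>T\<in>TT. card {J\<in>LL. T \<subseteq> J}) = (\<Sum>J\<in>LL. card {T\<in>TT. T \<subseteq> J})"
proof -
  assume f: "finite TT" "finite LL"
  have "(\<Sum>T\<in>TT. card {J\<in>LL. T \<subseteq> J}) = (\<Sum>T\<in>TT. \<Sum>J\<in>LL. if T \<subseteq> J then 1 else 0)"
    using f by (simp add: sum_ind_card)
  also have "\<dots> = (\<Sum>J\<in>LL. \<Sum>T\<in>TT. if T \<subseteq> J then 1 else 0)" by (rule sum.swap)
  also have "\<dots> = (\<Sum>J\<in>LL. card {T\<in>TT. T \<subseteq> J})" using f by (simp add: sum_ind_card)
  finally show ?thesis .
qed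

lemma count_TT:
  fixes A J :: "nat set"
  assumes J: "J \<subseteq> {1..m}" "card J = l" and A: "A \<subseteq> J" and kt: "card A \<le> t"
  shows "card {T\<in>{T. A \<subseteq> T \<and> T \<subseteq> {1..m} \<and> card T = t}. T \<subseteq> J} = (l - card A) choose (t - card A)"
proof -
  have fJ: "finite J" using finite_subset[OF J(1)] by simp
  have fA: "finite A" using finite_subset[OF A fJ] .
  have eq: "{T\<in>{T. A \<subseteq> T \<and> T \<subseteq> {1..m} \<and> card T = t}. T \<subseteq> J} = {T. A \<subseteq> T \<and> T \<subseteq> J \<and> card T = t}"
    using J by auto
  have "bij_betw (\<lambda>T. T - A) {T. A \<subseteq> T \<and> T \<subseteq> J \<and> card T = t} {B. B \<subseteq> J - A \<and> card B = t - card A}"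
  proof (rule bij_betw_byWitness[where f' = "\<lambda>B. B \<union> A"])
    show "\<forall>T\<in>{T. A \<subseteq> T \<and> T \<subseteq> J \<and> card T = t}. T - A \<union> A = T" by auto
    show "\<forall>B\<in>{B. B \<subseteq> J - A \<and> card B = t - card A}. B \<union> A - A = B" by auto
    show "(\<lambda>T. T - A) ` {T. A \<subseteq> T \<and> T \<subseteq> J \<and> card T = t} \<subseteq> {B. B \<subseteq> J - A \<and> card B = t - card A}"
    proof
      fix X assume "X \<in> (\<lambda>T. T - A) ` {T. A \<subseteq> T \<and> T \<subseteq> J \<and> card T = t}"
      then obtain T where T: "A \<subseteq> T" "T \<subseteq> J" "card T = t" "X = T - A" by auto
      have "finite T" using finite_subset[OF T(2) fJ] .
      then show "X \<in> {B. B \<subseteq> J - A \<and> card B = t - card A}" using T by (auto simp: card_Diff_subset fA)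
    qed
    show "(\<lambda>B. B \<union> A) ` {B. B \<subseteq> J - A \<and> card B = t - card A} \<subseteq> {T. A \<subseteq> T \<and> T \<subseteq> J \<and> card T = t}"
    proof
      fix X assume "X \<in> (\<lambda>B. B \<union> A) ` {B. B \<subseteq> J - A \<and> card B = t - card A}"
      then obtain B where B: "B \<subseteq> J - A" "card B = t - card A" "X = B \<union> A" by auto
      have "finite B" using finite_subset[OF B(1)] fJ by auto
      then have "card X = t" using B fA kt by (subst B(3), subst card_Un_disjoint) auto
      then show "X \<in> {T. A \<subseteq> T \<and> T \<subseteq> J \<and> card T = t}" using B A by auto
    qed
  qed
  then have "card {T. A \<subseteq> T \<and> T \<subseteq> J \<and> card T = t} = card {B. B \<subseteq> J - A \<and> card B = t - card A}"
    by (rule bij_betw_same_card)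
  also have "\<dots> = card (J - A) choose (t - card A)" using fJ by (simp add: n_subsets)
  also have "card (J - A) = l - card A" using J A fA by (simp add: card_Diff_subset)
  finally show ?thesis using eq by simp
qed

lemma count_TT': 
  fixes A J :: "nat set"
  assumes J: "J \<subseteq> {1..m}" "card J = l" and kt: "card A \<le> t"
  shows "card {T\<in>{T. A \<subseteq> T \<and> T \<subseteq> {1..m} \<and> card T = t}. T \<subseteq> J} = (if A \<subseteq> J then (l - card A) choose (t - card A) else 0)"
proof (cases "A \<subseteq> J")
  case True then show ?thesis using count_TT[OF J True kt] by simp
next
  case False
  then have "{T\<in>{T. A \<subseteq> T \<and> T \<subseteq> {1..m} \<and> card T = t}. T \<subseteq> J} = {}" by auto
  then show ?thesis using False by simp
qed

lemma digs_all_iff: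
  assumes "0 < t"
  shows "(\<forall>i<m^t. P (digs m t i)) \<longleftrightarrow> (\<forall>A. A \<subseteq> {1..m} \<and> A \<noteq> {} \<and> card A \<le> t \<longrightarrow> P A)"
proof
  assume H: "\<forall>i<m^t. P (digs m t i)"
  show "\<forall>A. A \<subseteq> {1..m} \<and> A \<noteq> {} \<and> card A \<le> t \<longrightarrow> P A"
  proof (intro allI impI)
    fix A assume A: "A \<subseteq> {1..m} \<and> A \<noteq> {} \<and> card A \<le> t"
    then obtain i where "i < m^t" "digs m t i = A" using digs_surj[of A m t] assms by auto
    then show "P A" using H by auto
  qed
next
  assume H: "\<forall>A. A \<subseteq> {1..m} \<and> A \<noteq> {} \<and> card A \<le> t \<longrightarrow> P A"
  show "\<forall>i<m^t. P (digs m t i)"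
  proof (intro allI impI)
    fix i assume i: "i < m^t"
    have "digs m t i \<subseteq> {1..m} \<and> digs m t i \<noteq> {} \<and> card (digs m t i) \<le> t"
      using digs_sub[OF i] digs_ne[OF assms] digs_card by simp
    then show "P (digs m t i)" using H by simp
  qed
qed

lemma eq_char:
  fixes S :: "nat set multiset" and t l m :: nat
  assumes blocks: "\<forall>J\<in>#S. J \<subseteq> {1..m} \<and> card J = l"
    and nonempty: "S \<noteq> {#}"
    and tpos: "0 < t"
    and tl: "t \<le> l"
  shows "(\<forall>i<m^t. real (size (filter_mset (\<lambda>J. digs m t i \<subseteq> J) S)) / real (size S)
             = real (cL l m (digs m t i)) / real (m choose l))
     \<longleftrightarrow> (\<exists>lam. block_design t m l lam S \<and>
            real lam = real (size S) * (real (cL l m {1..<1+t}) / real (m choose l)))"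
proof -
  obtain J0 where J0: "J0 \<in># S" using nonempty by (meson multiset_nonemptyE)
  have J0s: "J0 \<subseteq> {1..m}" "card J0 = l" using blocks J0 by auto
  have lm: "l \<le> m" using card_mono[OF _ J0s(1)] J0s(2) by simp
  define N where "N = real (size S)"
  have Npos: "N > 0" using nonempty by (simp add: N_def nonempty_has_size)
  define C where "C = real (m choose l)"
  have Cpos: "C > 0" using lm by (simp add: C_def)
  define cS where "cS A = size (filter_mset (\<lambda>J. A \<subseteq> J) S)" for A
  define I where "I = {1..<1+t}"
  have Is: "I \<subseteq> {1..m}" "card I = t" "I \<noteq> {}" using tl lm tpos by (auto simp: I_def)
  define EQA where "EQA A \<longleftrightarrow> real (cS A) / N = real (cL l m A) / C" for A
  have "(\<forall>i<m^t. real (size (filter_mset (\<lambda>J. digs m t i \<subseteq> J) S)) / real (size S)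
             = real (cL l m (digs m t i)) / real (m choose l))
        \<longleftrightarrow> (\<forall>i<m^t. EQA (digs m t i))" by (simp add: EQA_def cS_def N_def C_def)
  also have "\<dots> \<longleftrightarrow> (\<forall>A. A \<subseteq> {1..m} \<and> A \<noteq> {} \<and> card A \<le> t \<longrightarrow> EQA A)"
    by (rule digs_all_iff[OF tpos])
  also have "\<dots> \<longleftrightarrow> (\<exists>lam. block_design t m l lam S \<and> real lam = N * (real (cL l m I) / C))"
  proof
    assume H: "\<forall>A. A \<subseteq> {1..m} \<and> A \<noteq> {} \<and> card A \<le> t \<longrightarrow> EQA A"
    have HI: "real (cS I) = N * (real (cL l m I) / C)"
      using H Is Npos unfolding EQA_def by (auto simp: field_simps)
    have "block_design t m l (cS I) S"
      unfolding block_design_def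
    proof (intro conjI allI impI)
      show "\<forall>B\<in>#S. B \<subseteq> {1..m} \<and> card B = l" using blocks .
      fix T assume T: "T \<subseteq> {1..m} \<and> card T = t"
      then have "T \<noteq> {}" using tpos by auto
      then have "real (cS T) / N = real (cL l m T) / C" using H T unfolding EQA_def by auto
      also have "cL l m T = cL l m I" using cL_sym[of T m I] T Is by auto
      also have "real (cL l m I) / C = real (cS I) / N" using HI Npos by (simp add: field_simps)
      finally have "real (cS T) = real (cS I)" using Npos by (simp add: field_simps)
      then show "size (filter_mset (\<lambda>B. T \<subseteq> B) S) = cS I" unfolding cS_def by simp
    qed
    then show "\<exists>lam. block_design t m l lam S \<and> real lam = N * (real (cL l m I) / C)"
      using HI by blast
  next
    assume "\<exists>lam. block_design t m l lam S \<and> real lam = N * (real (cL l m I) / C)"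
    then obtain lam where bd: "block_design t m l lam S" and lam: "real lam = N * (real (cL l m I) / C)"
      by blast
    have dsgn: "\<And>T. T \<subseteq> {1..m} \<Longrightarrow> card T = t \<Longrightarrow> cS T = lam"
      using bd unfolding block_design_def cS_def by blast
    show "\<forall>A. A \<subseteq> {1..m} \<and> A \<noteq> {} \<and> card A \<le> t \<longrightarrow> EQA A"
    proof (intro allI impI)
      fix A assume A: "A \<subseteq> {1..m} \<and> A \<noteq> {} \<and> card A \<le> t"
      define TT where "TT = {T. A \<subseteq> T \<and> T \<subseteq> {1..m} \<and> card T = t}"
      define K where "K = (l - card A) choose (t - card A)"
      have Kpos: "K > 0" using A tl by (simp add: K_def)
      have fTT: "finite TT" unfolding TT_def by (rule finite_subset[of _ "Pow {1..m}"]) auto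
      have "(\<Sum>T\<in>TT. cS T) = (\<Sum>J\<in>#S. card {T\<in>TT. T \<subseteq> J})"
        unfolding cS_def by (rule dc_mset[OF fTT])
      also have "\<dots> = (\<Sum>J\<in>#S. if A \<subseteq> J then K else 0)"
      proof (intro arg_cong[where f=sum_mset] image_mset_cong)
        fix J assume "J \<in># S"
        then have "J \<subseteq> {1..m}" "card J = l" using blocks by auto
        from count_TT'[OF this, of A t] A show "card {T\<in>TT. T \<subseteq> J} = (if A \<subseteq> J then K else 0)"
          unfolding TT_def K_def by simp
      qed
      also have "\<dots> = cS A * K" unfolding cS_def using sum_mset_ind[of "\<lambda>J. A \<subseteq> J" K S] by simp
      finally have h1: "(\<Sum>T\<in>TT. cS T) = cS A * K" .
      have h2: "(\<Sum>T\<in>TT. cS T) = card TT * lam"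
        using dsgn by (simp add: TT_def)
      have "(\<Sum>T\<in>TT. cL l m T) = (\<Sum>J\<in>lsubsets l m. card {T\<in>TT. T \<subseteq> J})"
        unfolding cL_def by (rule dc_set[OF fTT finite_L])
      also have "\<dots> = (\<Sum>J\<in>lsubsets l m. K * (if A \<subseteq> J then 1 else 0))"
      proof (rule sum.cong[OF refl])
        fix J assume "J \<in> lsubsets l m"
        then have "J \<subseteq> {1..m}" "card J = l" by (auto simp: lsubsets_def)
        from count_TT'[OF this, of A t] A show "card {T\<in>TT. T \<subseteq> J} = K * (if A \<subseteq> J then 1 else 0)"
          unfolding TT_def K_def by simp
      qed
      also have "\<dots> = K * cL l m A"
        by (simp add: sum_distrib_left[symmetric] sum_ind_card finite_L cL_def)
      finally have h3: "(\<Sum>T\<in>TT. cL l m T) = K * cL l m A" .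
      have h4: "(\<Sum>T\<in>TT. cL l m T) = card TT * cL l m I"
      proof -
        have "(\<Sum>T\<in>TT. cL l m T) = (\<Sum>T\<in>TT. cL l m I)"
        proof (rule sum.cong[OF refl])
          fix T assume "T \<in> TT"
          then have "T \<subseteq> {1..m}" "card T = card I" using Is by (auto simp: TT_def)
          then show "cL l m T = cL l m I" using cL_sym[of T m I l] Is(1) by blast
        qed
        then show ?thesis by simp
      qed
      have r1: "real K * real (cS A) = real (card TT) * real lam"
        using h1 h2 by (metis of_nat_mult mult.commute)
      have r2: "real K * real (cL l m A) = real (card TT) * real (cL l m I)"
        using h3 h4 by (metis of_nat_mult)
      have "real K * (real (cS A) * C) = real K * (N * real (cL l m A))"
      proof -
        have "real K * (real (cS A) * C) = real (card TT) * real lam * C" using r1 by simp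
        also have "\<dots> = N * (real (card TT) * real (cL l m I))" using lam Cpos by (simp add: field_simps)
        also have "\<dots> = real K * (N * real (cL l m A))" using r2 by simp
        finally show ?thesis .
      qed
      then have "real (cS A) * C = N * real (cL l m A)" using Kpos by simp
      then show "EQA A" unfolding EQA_def using Npos Cpos by (simp add: field_simps)
    qed
  qed
  finally show ?thesis by (simp add: N_def C_def I_def)
qed

lemma swap_ms: fixes a b :: "nat \<Rightarrow> nat set \<Rightarrow> real"
  shows "(\<Sum>i\<in>I. (\<Sum>J\<in>#S. a i J) * (\<Sum>J'\<in>L. b i J')) = (\<Sum>J\<in>#S. \<Sum>J'\<in>L. \<Sum>i\<in>I. a i J * b i J')"
proof -
  have "(\<Sum>i\<in>I. (\<Sum>J\<in>#S. a i J) * (\<Sum>J'\<in>L. b i J')) = (\<Sum>i\<in>I. \<Sum>J\<in>#S. \<Sum>J'\<in>L. a i J * b i J')"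
    unfolding sum_mset_distrib_right by (simp only: sum_distrib_left)
  also have "\<dots> = (\<Sum>J\<in>#S. \<Sum>i\<in>I. \<Sum>J'\<in>L. a i J * b i J')" by (rule sum_mset_swap[symmetric])
  also have "\<dots> = (\<Sum>J\<in>#S. \<Sum>J'\<in>L. \<Sum>i\<in>I. a i J * b i J')" by (simp add: sum.swap[of _ I])
  finally show ?thesis .
qed

lemma swap_ss: fixes a b :: "nat \<Rightarrow> nat set \<Rightarrow> real"
  shows "(\<Sum>i\<in>I. (\<Sum>J\<in>K. a i J) * (\<Sum>J'\<in>L. b i J')) = (\<Sum>J\<in>K. \<Sum>J'\<in>L. \<Sum>i\<in>I. a i J * b i J')"
proof -
  have "(\<Sum>i\<in>I. (\<Sum>J\<in>K. a i J) * (\<Sum>J'\<in>L. b i J')) = (\<Sum>i\<in>I. \<Sum>J\<in>K. \<Sum>J'\<in>L. a i J * b i J')"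
    unfolding sum_distrib_right by (simp only: sum_distrib_left)
  also have "\<dots> = (\<Sum>J\<in>K. \<Sum>i\<in>I. \<Sum>J'\<in>L. a i J * b i J')" by (rule sum.swap)
  also have "\<dots> = (\<Sum>J\<in>K. \<Sum>J'\<in>L. \<Sum>i\<in>I. a i J * b i J')" by (simp add: sum.swap[of _ I])
  finally show ?thesis .
qed

lemma swap_mm: fixes a b :: "nat \<Rightarrow> nat set \<Rightarrow> real"
  shows "(\<Sum>i\<in>I. (\<Sum>J\<in>#S. a i J) * (\<Sum>J'\<in>#S. b i J')) = (\<Sum>J\<in>#S. \<Sum>J'\<in>#S. \<Sum>i\<in>I. a i J * b i J')"
proof -
  have "(\<Sum>i\<in>I. (\<Sum>J\<in>#S. a i J) * (\<Sum>J'\<in>#S. b i J')) = (\<Sum>i\<in>I. \<Sum>J\<in>#S. \<Sum>J'\<in>#S. a i J * b i J')"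
    unfolding sum_mset_distrib_right by (simp only: sum_mset_distrib_left)
  also have "\<dots> = (\<Sum>J\<in>#S. \<Sum>i\<in>I. \<Sum>J'\<in>#S. a i J * b i J')" by (rule sum_mset_swap[symmetric])
  also have "\<dots> = (\<Sum>J\<in>#S. \<Sum>J'\<in>#S. \<Sum>i\<in>I. a i J * b i J')" by (simp add: sum_mset_swap)
  finally show ?thesis .
qed

lemma QQ: assumes "J \<subseteq> {1..m}" "J' \<subseteq> {1..m}"
  shows "(\<Sum>i<m^t. (if digs m t i \<subseteq> J then 1 else 0) * (if digs m t i \<subseteq> J' then 1 else 0))
     = real (card (J \<inter> J')) ^ t"
proof -
  have "(\<Sum>i<m^t. (if digs m t i \<subseteq> J then 1 else 0) * (if digs m t i \<subseteq> J' then 1 else 0))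
     = (\<Sum>i<m^t. if digs m t i \<subseteq> J \<inter> J' then 1 else (0::real))"
    by (rule sum.cong) auto
  also have "\<dots> = real (card ((J \<inter> J') \<inter> {1..m})) ^ t" by (rule card_sum_digs)
  also have "(J \<inter> J') \<inter> {1..m} = J \<inter> J'" using assms by auto
  finally show ?thesis .
qed

lemma sum_mset_cong: "(\<And>x. x \<in># M \<Longrightarrow> f x = g x) \<Longrightarrow> (\<Sum>x\<in>#M. f x) = (\<Sum>x\<in>#M. g x)"
  by (induction M) auto

theorem corollary3p16:
  fixes S :: "nat set multiset" and t l m :: nat
  assumes blocks: "\<forall>J\<in>#S. J \<subseteq> {1..m} \<and> card J = l"
    and nonempty: "S \<noteq> {#}"
    and tpos: "0 < t"
    and tl: "t \<le> l"
  shows "(1 / real (size S) ^ 2) * (\<Sum>J\<in>#S. \<Sum>J'\<in>#S. real (card (J \<inter> J')) ^ t)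
           \<ge> mtrace (Dtlm t l m * Dtlm t l m)
    \<and> ((1 / real (size S) ^ 2) * (\<Sum>J\<in>#S. \<Sum>J'\<in>#S. real (card (J \<inter> J')) ^ t)
           = mtrace (Dtlm t l m * Dtlm t l m)
       \<longleftrightarrow> (\<exists>lam. block_design t m l lam S \<and>
              real lam = real (size S) * mtrace (Dtlm t l m * kron_list (map (Ess m) [1..<t+1]))))"
proof -
  obtain J0 where J0: "J0 \<in># S" using nonempty by (meson multiset_nonemptyE)
  have J0s: "J0 \<subseteq> {1..m}" "card J0 = l" using blocks J0 by auto
  have J0L: "J0 \<in> lsubsets l m" using J0s by (simp add: lsubsets_def)
  have lm: "l \<le> m" using card_mono[OF _ J0s(1)] J0s(2) by simp
  define N where "N = real (size S)"
  have Npos: "N > 0" using nonempty by (simp add: N_def nonempty_has_size)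
  define C where "C = real (m choose l)"
  have Cpos: "C > 0" using lm by (simp add: C_def)
  define M where "M = m^t"
  define L where "L = lsubsets l m"
  define Q where "Q i J = (if digs m t i \<subseteq> J then 1 else 0 :: real)" for i J
  define Ss where "Ss i = (\<Sum>J\<in>#S. Q i J)" for i
  define Ls where "Ls i = (\<Sum>J\<in>L. Q i J)" for i
  define d where "d i = Ls i / C" for i
  define f where "f i = Ss i / N" for i
  define W0 where "W0 = WW t l m J0"
  have Ss_eq: "Ss i = real (size (filter_mset (\<lambda>J. digs m t i \<subseteq> J) S))" for i
    unfolding Ss_def Q_def using sum_mset_ind[of "\<lambda>J. digs m t i \<subseteq> J" 1 S] by simp
  have Ls_eq: "Ls i = real (cL l m (digs m t i))" for i
    unfolding Ls_def Q_def L_def cL_def by (simp add: sum_ind_card finite_L)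
  have QQ': "J \<subseteq> {1..m} \<Longrightarrow> J' \<subseteq> {1..m} \<Longrightarrow> (\<Sum>i\<in>{..<M}. Q i J * Q i J') = real (card (J \<inter> J')) ^ t"
    for J J' unfolding Q_def M_def by (rule QQ)
  have LsubS: "\<And>J. J \<in> L \<Longrightarrow> J \<subseteq> {1..m}" by (auto simp: L_def lsubsets_def)
  have WWeq: "J \<in> L \<Longrightarrow> (\<Sum>J'\<in>L. \<Sum>i\<in>{..<M}. Q i J * Q i J') = W0" for J
  proof -
    assume J: "J \<in> L"
    have "(\<Sum>J'\<in>L. \<Sum>i\<in>{..<M}. Q i J * Q i J') = WW t l m J"
      unfolding WW_def L_def[symmetric] by (rule sum.cong[OF refl]) (use J LsubS QQ' in auto)
    also have "\<dots> = W0" unfolding W0_def using WW_sym[OF _ J0L] J by (simp add: L_def)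
    finally show ?thesis .
  qed
  have SinL: "J \<in># S \<Longrightarrow> J \<in> L" for J using blocks by (auto simp: L_def lsubsets_def)
  have cardL: "real (card L) = C" by (simp add: L_def card_L C_def)
  have G1: "(\<Sum>i\<in>{..<M}. Ss i * Ls i) = N * W0"
  proof -
    have "(\<Sum>i\<in>{..<M}. Ss i * Ls i) = (\<Sum>J\<in>#S. \<Sum>J'\<in>L. \<Sum>i\<in>{..<M}. Q i J * Q i J')"
      unfolding Ss_def Ls_def by (rule swap_ms)
    also have "\<dots> = (\<Sum>J\<in>#S. W0)"
      by (intro arg_cong[where f=sum_mset] image_mset_cong) (use WWeq SinL in auto)
    finally show ?thesis by (simp add: N_def)
  qed
  have G2: "(\<Sum>i\<in>{..<M}. Ls i * Ls i) = C * W0"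
  proof -
    have "(\<Sum>i\<in>{..<M}. Ls i * Ls i) = (\<Sum>J\<in>L. \<Sum>J'\<in>L. \<Sum>i\<in>{..<M}. Q i J * Q i J')"
      unfolding Ls_def by (rule swap_ss)
    also have "\<dots> = (\<Sum>J\<in>L. W0)" by (rule sum.cong[OF refl]) (use WWeq in auto)
    finally show ?thesis using cardL by simp
  qed
  have G3: "(\<Sum>J\<in>#S. \<Sum>J'\<in>#S. real (card (J \<inter> J')) ^ t) = (\<Sum>i\<in>{..<M}. Ss i * Ss i)"
  proof -
    have "(\<Sum>i\<in>{..<M}. Ss i * Ss i) = (\<Sum>J\<in>#S. \<Sum>J'\<in>#S. \<Sum>i\<in>{..<M}. Q i J * Q i J')"
      unfolding Ss_def by (rule swap_mm)
    also have "\<dots> = (\<Sum>J\<in>#S. \<Sum>J'\<in>#S. real (card (J \<inter> J')) ^ t)"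
    proof (rule sum_mset_cong)
      fix J assume J: "J \<in># S"
      show "(\<Sum>J'\<in>#S. \<Sum>i\<in>{..<M}. Q i J * Q i J') = (\<Sum>J'\<in>#S. real (card (J \<inter> J')) ^ t)"
        by (rule sum_mset_cong) (use J blocks QQ' in auto)
    qed
    finally show ?thesis by simp
  qed
  have Dcar: "Dtlm t l m \<in> carrier_mat M M" by (simp add: Dtlm_def M_def)
  have Dent: "Dtlm t l m $$ (i,j) = (if i = j then d i else 0)" if "i < M" "j < M" for i j
  proof -
    have "Dtlm t l m $$ (i,j) = (1 / C) * (\<Sum>J\<in>L. if i = j \<and> digs m t i \<subseteq> J then 1 else 0)"
      using that by (simp add: Dtlm_def M_def C_def L_def kron_pow_DJ)
    then show ?thesis by (cases "i = j") (simp_all add: d_def Ls_def Q_def)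
  qed
  define i0 where "i0 = eidx m 1 t"
  have i0: "i0 < M" "digs m t i0 = {1..<1+t}" using eidx_props[of 1 t m] tl lm by (auto simp: i0_def M_def)
  define E where "E = kron_list (map (Ess m) [1..<t+1])"
  have Ecar: "E \<in> carrier_mat M M" unfolding carrier_mat_def mem_Collect_eq E_def M_def unfolding dims_kron_list length_upt by simp
  have Eent: "E $$ (i,j) = (if i = j then (if i = i0 then 1 else 0) else 0)" if "i < M" "j < M" for i j
  proof -
    have "[1..<t+1] = [1..<1+t]" by simp
    then have "E $$ (i,j) = (if i = j \<and> i = eidx m 1 t then 1 else 0)"
      unfolding E_def using kron_list_Ess[of 1 t m i j] that tl lm by (simp add: M_def)
    then show ?thesis by (simp add: i0_def)
  qed
  have trDD: "mtrace (Dtlm t l m * Dtlm t l m) = (\<Sum>i\<in>{..<M}. d i * d i)"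
    using trace_diag[OF Dcar Dcar Dent Dent] by simp
  have trDE: "mtrace (Dtlm t l m * E) = d i0"
  proof -
    have "mtrace (Dtlm t l m * E) = (\<Sum>i\<in>{..<M}. d i * (if i = i0 then 1 else 0))"
      using trace_diag[OF Dcar Ecar Dent Eent] by simp
    also have "\<dots> = d i0" using i0 by (simp add: if_distrib cong: if_cong)
    finally show ?thesis .
  qed
  define LHS where "LHS = (1 / real (size S) ^ 2) * (\<Sum>J\<in>#S. \<Sum>J'\<in>#S. real (card (J \<inter> J')) ^ t)"
  have LHS_eq: "LHS = (\<Sum>i\<in>{..<M}. f i * f i)"
    unfolding LHS_def G3 f_def N_def[symmetric] by (simp add: sum_distrib_left power2_eq_square)
  have fd: "(\<Sum>i\<in>{..<M}. f i * d i) = W0 / C"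
  proof -
    have "(\<Sum>i\<in>{..<M}. f i * d i) = (\<Sum>i\<in>{..<M}. Ss i * Ls i) / (N * C)"
      by (simp add: f_def d_def sum_divide_distrib)
    then show ?thesis using G1 Npos by simp
  qed
  have dd: "(\<Sum>i\<in>{..<M}. d i * d i) = W0 / C"
  proof -
    have "(\<Sum>i\<in>{..<M}. d i * d i) = (\<Sum>i\<in>{..<M}. Ls i * Ls i) / (C * C)"
      by (simp add: d_def sum_divide_distrib)
    then show ?thesis using G2 Cpos by simp
  qed
  have key: "LHS - mtrace (Dtlm t l m * Dtlm t l m) = (\<Sum>i\<in>{..<M}. (f i - d i)^2)"
  proof -
    have "(\<Sum>i\<in>{..<M}. (f i - d i)^2) = (\<Sum>i\<in>{..<M}. f i * f i) - 2 * (\<Sum>i\<in>{..<M}. f i * d i) + (\<Sum>i\<in>{..<M}. d i * d i)"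
      by (simp add: power2_diff sum.distrib sum_subtractf sum_distrib_left power2_eq_square algebra_simps)
    then show ?thesis using LHS_eq fd dd trDD by simp
  qed
  have ge: "LHS \<ge> mtrace (Dtlm t l m * Dtlm t l m)"
    using key sum_nonneg[of "{..<M}" "\<lambda>i. (f i - d i)^2"] by simp
  have "LHS = mtrace (Dtlm t l m * Dtlm t l m) \<longleftrightarrow> (\<forall>i<M. f i = d i)"
  proof -
    have "LHS = mtrace (Dtlm t l m * Dtlm t l m) \<longleftrightarrow> (\<Sum>i\<in>{..<M}. (f i - d i)^2) = 0"
      using key by linarith
    also have "\<dots> \<longleftrightarrow> (\<forall>i\<in>{..<M}. (f i - d i)^2 = 0)"
      by (rule sum_nonneg_eq_0_iff) auto
    finally show ?thesis by auto
  qed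
  also have "\<dots> \<longleftrightarrow> (\<exists>lam. block_design t m l lam S \<and>
            real lam = real (size S) * (real (cL l m {1..<1+t}) / real (m choose l)))"
    unfolding M_def f_def d_def Ss_eq Ls_eq N_def C_def by (rule eq_char[OF blocks nonempty tpos tl])
  also have "real (cL l m {1..<1+t}) / real (m choose l) = mtrace (Dtlm t l m * E)"
    using trDE i0 by (simp add: d_def Ls_eq C_def)
  finally show ?thesis using ge unfolding LHS_def E_def by simp
qed

end
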